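(* For every $g\ge 1$, every nice path of $\mathcal{H}_g$ from $v_1$ to $v_2$ is oddly oriented relative to $\mathcal{H}_g^e$.
   Context: The graphs $\mathcal{H}_g$ with hubs $v_1,v_2,v_3,v_4$ and orientations $\mathcal{H}_g^e$ are defined recursively. $\mathcal{H}_1$ is the 4-cycle with edges $\{v_1,v_2\},\{v_1,v_3\},\{v_2,v_4\},\{v_3,v_4\}$, oriented $v_1\to v_2$, $v_1\to v_3$, $v_4\to v_2$, $v_3\to v_4$. For $g>1$, take four disjoint copies $\mathcal{H}_{g-1}^{(i)}$, $i=1,\dots,4$, of $\mathcal{H}_{g-1}$, each oriented as a copy of $\mathcal{H}_{g-1}^e$, with hubs $v_k^{(i)}$; identify $v_1^{(1)},v_1^{(4)}$ as $v_1$, $v_2^{(2)},v_1^{(3)}$ as $v_4$, $v_2^{(1)},v_1^{(2)}$ as $v_3$, and $v_2^{(3)},v_2^{(4)}$ as $v_2$; $\mathcal{H}_g^e$ is the union of the copies' orientations. Paths are elementary (no repeated vertices). A path $P$ of a graph $G$ is nice if the subgraph of $G$ induced by the vertices not on $P$ has a perfect matching. A path from $u$ to $v$ is oddly oriented if, traversing it from $u$ to $v$, an odd number of its edges are oriented in the direction of traversal. *)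

theory Defs
  imports Main
begin

text \<open>Vertices of H_g: either a hub v_k (Hub k, k in 1..4) of the current level, or
  an internal vertex In i v coming from copy i (1..4) of H_(g-1), where v is a vertex
  of H_(g-1) that is not identified with a hub of H_g (i.e. v is not v_1 or v_2 of that copy).\<close>

datatype hvert = Hub nat | In nat hvert

text \<open>Image of hub v_1 and v_2 of copy i in H_g.\<close>
definition hubA :: "nat \<Rightarrow> nat" where
  "hubA i = (if i = 1 then 1 else if i = 2 then 3 else if i = 3 then 4 else 1)"
definition hubB :: "nat \<Rightarrow> nat" where
  "hubB i = (if i = 1 then 3 else if i = 2 then 4 else 2)"

definition emb :: "nat \<Rightarrow> hvert \<Rightarrow> hvert" where
  "emb i v = (if v = Hub 1 then Hub (hubA i) else if v = Hub 2 then Hub (hubB i) else In i v)"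

text \<open>Arcs of the orientation H_g^e (arcs 0 is unused).\<close>
fun arcs :: "nat \<Rightarrow> (hvert \<times> hvert) set" where
  "arcs 0 = {}"
| "arcs (Suc 0) = {(Hub 1, Hub 2), (Hub 1, Hub 3), (Hub 4, Hub 2), (Hub 3, Hub 4)}"
| "arcs (Suc (Suc n)) =
     (\<Union>i\<in>{1..4::nat}. (\<lambda>(a, b). (emb i a, emb i b)) ` arcs (Suc n))"

definition hverts :: "nat \<Rightarrow> hvert set" where
  "hverts g = fst ` arcs g \<union> snd ` arcs g"

definition hedges :: "nat \<Rightarrow> hvert set set" where
  "hedges g = {{a, b} | a b. (a, b) \<in> arcs g}"

definition is_path :: "nat \<Rightarrow> hvert list \<Rightarrow> hvert \<Rightarrow> hvert \<Rightarrow> bool" where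
  "is_path g P u v \<longleftrightarrow> P \<noteq> [] \<and> hd P = u \<and> last P = v \<and> distinct P \<and>
     set P \<subseteq> hverts g \<and> (\<forall>i. Suc i < length P \<longrightarrow> {P ! i, P ! Suc i} \<in> hedges g)"

definition perfect_matching :: "'a set set \<Rightarrow> 'a set \<Rightarrow> 'a set set \<Rightarrow> bool" where
  "perfect_matching E V M \<longleftrightarrow> M \<subseteq> E \<and> (\<forall>e\<in>M. e \<subseteq> V) \<and>
     (\<forall>x\<in>V. \<exists>!e\<in>M. x \<in> e)"

definition nice :: "nat \<Rightarrow> hvert list \<Rightarrow> bool" where
  "nice g P \<longleftrightarrow> (\<exists>M. perfect_matching {e \<in> hedges g. e \<subseteq> hverts g - set P}
                         (hverts g - set P) M)"

definition oddly_oriented :: "nat \<Rightarrow> hvert list \<Rightarrow> bool" where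
  "oddly_oriented g P \<longleftrightarrow>
     odd (card {i. Suc i < length P \<and> (P ! i, P ! Suc i) \<in> arcs g})"

end

theory Submission
  imports Defs
begin

fun adjp :: "nat \<Rightarrow> hvert list \<Rightarrow> bool" where
  "adjp g (x # y # zs) = ({x, y} \<in> hedges g \<and> adjp g (y # zs))"
| "adjp g _ = True"

fun fw :: "nat \<Rightarrow> hvert list \<Rightarrow> nat" where
  "fw g (x # y # zs) = (if (x, y) \<in> arcs g then 1 else 0) + fw g (y # zs)"
| "fw g _ = 0"

definition pth :: "nat \<Rightarrow> hvert list \<Rightarrow> hvert \<Rightarrow> hvert \<Rightarrow> bool" where
  "pth g P u v \<longleftrightarrow> P \<noteq> [] \<and> hd P = u \<and> last P = v \<and> distinct P \<and> adjp g P"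

lemma all_nat_split: "(\<forall>i::nat. Q i) \<longleftrightarrow> Q 0 \<and> (\<forall>i. Q (Suc i))"
  by (metis not0_implies_Suc)

lemma adjp_nth: "adjp g P \<longleftrightarrow> (\<forall>i. Suc i < length P \<longrightarrow> {P ! i, P ! Suc i} \<in> hedges g)"
proof (induction g P rule: adjp.induct)
  case (1 g x y zs)
  then show ?case
    apply (subst all_nat_split)
    apply simp
    done
qed auto

lemma fw_card: "card {i. Suc i < length P \<and> (P ! i, P ! Suc i) \<in> arcs g} = fw g P"
proof (induction g P rule: fw.induct)
  case (1 g x y zs)
  let ?A = "{i. Suc i < length (y # zs) \<and> ((y # zs) ! i, (y # zs) ! Suc i) \<in> arcs g}"
  have e: "{i. Suc i < length (x # y # zs) \<and> ((x # y # zs) ! i, (x # y # zs) ! Suc i) \<in> arcs g}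
      = {i::nat. i = 0 \<and> (x, y) \<in> arcs g} \<union> Suc ` ?A"
    apply (rule set_eqI)
    subgoal for i by (cases i) auto
    done
  have f: "finite ?A" by (rule finite_subset[of _ "{..<length (y # zs)}"]) auto
  have c0: "card {i::nat. i = 0 \<and> (x, y) \<in> arcs g} = (if (x, y) \<in> arcs g then 1 else 0)"
    by auto
  have "card ({i::nat. i = 0 \<and> (x, y) \<in> arcs g} \<union> Suc ` ?A) = card {i::nat. i = 0 \<and> (x, y) \<in> arcs g} + card (Suc ` ?A)"
    using f by (intro card_Un_disjoint) auto
  also have "card (Suc ` ?A) = card ?A" by (rule card_image) auto
  finally show ?case using e c0 1 by simp
next
  case ("2_1" g)
  then show ?case by simp
next
  case ("2_2" g v)
  then show ?case by simp
qed

lemma edge_iff: "{u, w} \<in> hedges g \<longleftrightarrow> (u, w) \<in> arcs g \<or> (w, u) \<in> arcs g"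
  unfolding hedges_def by (auto simp: doubleton_eq_iff)

lemma emb_inj: "i \<in> {1..4} \<Longrightarrow> emb i x = emb i y \<longleftrightarrow> x = y"
  by (auto simp: emb_def hubA_def hubB_def split: if_splits)

lemma arcs_SS: "(u, w) \<in> arcs (Suc (Suc n)) \<longleftrightarrow>
   (\<exists>i\<in>{1..4}. \<exists>x y. (x, y) \<in> arcs (Suc n) \<and> u = emb i x \<and> w = emb i y)"
  by auto

lemma noloop: "(x, x) \<notin> arcs (Suc n)"
proof (induction n arbitrary: x)
  case 0
  then show ?case by auto
next
  case (Suc n)
  show ?case
  proof
    assume "(x, x) \<in> arcs (Suc (Suc n))"
    then obtain i a b where i: "i \<in> {1..4}" and ab: "(a, b) \<in> arcs (Suc n)" "x = emb i a" "x = emb i b"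
      unfolding arcs_SS by blast
    then have "a = b" using emb_inj[OF i] by metis
    then show False using ab Suc.IH by simp
  qed
qed

lemma emb_hub: "emb i x = Hub k \<Longrightarrow> x = Hub 1 \<and> k = hubA i \<or> x = Hub 2 \<and> k = hubB i"
  by (auto simp: emb_def split: if_splits)

lemma emb_In: "emb j x = In i v \<Longrightarrow> j = i \<and> x = v"
  by (auto simp: emb_def split: if_splits)

lemma arc_emb:
  assumes i: "i \<in> {1..4}"
  shows "(emb i x, emb i y) \<in> arcs (Suc (Suc n)) \<longleftrightarrow> (x, y) \<in> arcs (Suc n)"
proof
  assume "(x, y) \<in> arcs (Suc n)"
  then show "(emb i x, emb i y) \<in> arcs (Suc (Suc n))" using i unfolding arcs_SS by blast
next
  assume "(emb i x, emb i y) \<in> arcs (Suc (Suc n))"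
  then obtain j a b where j: "j \<in> {1..4}" and ab: "(a, b) \<in> arcs (Suc n)" "emb i x = emb j a" "emb i y = emb j b"
    unfolding arcs_SS by blast
  show "(x, y) \<in> arcs (Suc n)"
  proof (cases "j = i")
    case True
    then show ?thesis using ab emb_inj[OF i] by metis
  next
    case False
    have nab: "a \<noteq> b" using ab noloop by metis
    have "x \<in> {Hub 1, Hub 2} \<and> a \<in> {Hub 1, Hub 2}"
      using ab(2) False by (auto simp: emb_def split: if_splits)
    moreover have "y \<in> {Hub 1, Hub 2} \<and> b \<in> {Hub 1, Hub 2}"
      using ab(3) False by (auto simp: emb_def split: if_splits)
    ultimately show ?thesis using ab(2,3) nab False i j
      by (auto simp: emb_def hubA_def hubB_def split: if_splits)
  qed
qed


lemma adjp_emb: "i \<in> {1..4} \<Longrightarrow> adjp (Suc (Suc n)) (map (emb i) xs) \<longleftrightarrow> adjp (Suc n) xs"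
  by (induction xs rule: induct_list012) (auto simp: edge_iff arc_emb simp del: arcs.simps(3))

lemma fw_emb: "i \<in> {1..4} \<Longrightarrow> fw (Suc (Suc n)) (map (emb i) xs) = fw (Suc n) xs"
  by (induction xs rule: induct_list012) (auto simp: arc_emb simp del: arcs.simps(3))

lemma adjp_append: "adjp g (xs @ y # ys) \<longleftrightarrow> adjp g (xs @ [y]) \<and> adjp g (y # ys)"
  by (induction xs rule: induct_list012) auto

lemma fw_append: "fw g (xs @ y # ys) = fw g (xs @ [y]) + fw g (y # ys)"
  by (induction xs rule: induct_list012) auto

lemma copy:
  "adjp (Suc (Suc n)) (u # ys @ [w]) \<Longrightarrow> \<forall>y\<in>set ys. y \<notin> range Hub \<Longrightarrow>
   \<exists>i\<in>{1..4}. \<forall>z\<in>set (u # ys @ [w]). \<exists>x. z = emb i x"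
proof (induction ys arbitrary: u)
  case Nil
  then have "(u, w) \<in> arcs (Suc (Suc n)) \<or> (w, u) \<in> arcs (Suc (Suc n))"
    by (simp add: edge_iff)
  then show ?case unfolding arcs_SS by auto
next
  case (Cons y ys)
  then have e: "{u, y} \<in> hedges (Suc (Suc n))" and a: "adjp (Suc (Suc n)) (y # ys @ [w])"
    by auto
  have "\<exists>i\<in>{1..4}. \<forall>z\<in>set (y # ys @ [w]). \<exists>x. z = emb i x"
    using Cons.IH[OF a] Cons.prems(2) by simp
  then obtain i where i: "i \<in> {1..4}"
    and all: "\<forall>z\<in>set (y # ys @ [w]). \<exists>x. z = emb i x" by blast
  obtain x where yx: "y = emb i x" using all by auto
  have "y \<notin> range Hub" using Cons.prems(2) by auto
  then have yi: "y = In i x" using yx by (auto simp: emb_def split: if_splits)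
  from e have "(u, y) \<in> arcs (Suc (Suc n)) \<or> (y, u) \<in> arcs (Suc (Suc n))"
    by (simp add: edge_iff)
  then obtain j a b where "u = emb j a" "y = emb j b"
    unfolding arcs_SS by blast
  then have "j = i" using yi emb_In by metis
  then have "\<exists>x. u = emb i x" using \<open>u = emb j a\<close> by blast
  then show ?case using i all by auto
qed

lemma last_distinct: "distinct (v # r) \<Longrightarrow> last (v # r) = v \<Longrightarrow> r = []"
  by (metis distinct.simps(2) last_ConsR last_in_set)

lemma edge1: "{u, w} \<in> hedges (Suc 0) \<longleftrightarrow>
  (u, w) \<in> {(Hub 1, Hub 2), (Hub 1, Hub 3), (Hub 4, Hub 2), (Hub 3, Hub 4),
             (Hub 2, Hub 1), (Hub 3, Hub 1), (Hub 2, Hub 4), (Hub 4, Hub 3)}"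
  by (auto simp: edge_iff)

lemma base:
  assumes p: "pth (Suc 0) P (Hub 1) (Hub 2)"
  shows "odd (fw (Suc 0) P)"
proof -
  from p obtain r where P: "P = Hub 1 # r" unfolding pth_def by (cases P) auto
  have "r \<noteq> []" using p P unfolding pth_def by auto
  then obtain b r1 where r: "r = b # r1" by (cases r) auto
  have "b = Hub 2 \<or> b = Hub 3" using p P r unfolding pth_def by (auto simp: edge1)
  then show ?thesis
  proof
    assume b: "b = Hub 2"
    then have "r1 = []" using p P r last_distinct[of "Hub 2" r1] unfolding pth_def by auto
    then show ?thesis using P r b by simp
  next
    assume b: "b = Hub 3"
    have "r1 \<noteq> []" using p P r b unfolding pth_def by auto
    then obtain c r2 where r1: "r1 = c # r2" by (cases r1) auto
    have "c = Hub 4" using p P r b r1 unfolding pth_def by (auto simp: edge1)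
    have "r2 \<noteq> []" using p P r b r1 \<open>c = Hub 4\<close> unfolding pth_def by auto
    then obtain d r3 where r2: "r2 = d # r3" by (cases r2) auto
    have "d = Hub 2" using p P r b r1 r2 \<open>c = Hub 4\<close> unfolding pth_def by (auto simp: edge1)
    then have "r3 = []" using p P r r1 r2 last_distinct[of "Hub 2" r3] unfolding pth_def by auto
    then show ?thesis using P r b r1 r2 \<open>c = Hub 4\<close> \<open>d = Hub 2\<close> by simp
  qed
qed


definition unemb :: "nat \<Rightarrow> hvert \<Rightarrow> hvert" where
  "unemb i w = (case w of Hub k \<Rightarrow> if k = hubA i then Hub 1 else Hub 2 | In j v \<Rightarrow> v)"

lemma emb_unemb: "i \<in> {1..4} \<Longrightarrow> emb i (unemb i (emb i x)) = emb i x"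
  by (auto simp: emb_def unemb_def hubA_def hubB_def)

lemma first_seg:
  assumes p: "pth (Suc (Suc n)) P (Hub a) (Hub 2)" and a2: "a \<noteq> 2"
  shows "\<exists>i ys zs b. i \<in> {1..4} \<and> P = (Hub a # ys) @ Hub b # zs \<and>
    ((a = hubA i \<and> b = hubB i) \<or> (a = hubB i \<and> b = hubA i)) \<and>
    fw (Suc (Suc n)) P = fw (Suc (Suc n)) (Hub a # ys @ [Hub b]) + fw (Suc (Suc n)) (Hub b # zs) \<and>
    pth (Suc (Suc n)) (Hub b # zs) (Hub b) (Hub 2) \<and> Hub a \<notin> set (Hub b # zs) \<and>
    set (Hub b # zs) \<subseteq> set P \<and>
    (a = hubA i \<longrightarrow> (\<exists>Q'. pth (Suc n) Q' (Hub 1) (Hub 2) \<and>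
        fw (Suc (Suc n)) (Hub a # ys @ [Hub b]) = fw (Suc n) Q'))"
proof -
  let ?G = "Suc (Suc n)"
  from p obtain rest where P: "P = Hub a # rest" unfolding pth_def by (cases P) auto
  have "rest \<noteq> []" using p P a2 unfolding pth_def by auto
  then have "Hub 2 \<in> set rest" using p P unfolding pth_def by (metis last_ConsR last_in_set)
  then have "\<exists>x\<in>set rest. x \<in> range Hub" by blast
  from split_list_first_prop[OF this] obtain ys h zs where
    rest: "rest = ys @ h # zs" and h: "h \<in> range Hub" and ys: "\<forall>y\<in>set ys. y \<notin> range Hub"
    by blast
  from h obtain b where hb: "h = Hub b" by blast
  have PS: "P = (Hub a # ys) @ Hub b # zs" using P rest hb by simp
  have adP: "adjp ?G P" and dP: "distinct P" and lP: "last P = Hub 2" using p unfolding pth_def by auto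
  have adS: "adjp ?G (Hub a # ys @ [Hub b])" and adR: "adjp ?G (Hub b # zs)"
    using adP PS adjp_append[of ?G "Hub a # ys" "Hub b" zs] by auto
  have fwS: "fw ?G P = fw ?G (Hub a # ys @ [Hub b]) + fw ?G (Hub b # zs)"
    using PS fw_append[of ?G "Hub a # ys" "Hub b" zs] by simp
  from copy[OF adS ys] obtain i where i: "i \<in> {1..4}"
    and all: "\<forall>z\<in>set (Hub a # ys @ [Hub b]). \<exists>x. z = emb i x" by blast
  obtain xa where "Hub a = emb i xa" using all by auto
  then have ha: "a = hubA i \<or> a = hubB i" using emb_hub by metis
  obtain xb where "Hub b = emb i xb" using all by auto
  then have hb2: "b = hubA i \<or> b = hubB i" using emb_hub by metis
  have ab: "a \<noteq> b" using dP PS by auto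
  have dir: "(a = hubA i \<and> b = hubB i) \<or> (a = hubB i \<and> b = hubA i)" using ha hb2 ab by auto
  have pR: "pth ?G (Hub b # zs) (Hub b) (Hub 2)"
    using adR dP lP PS unfolding pth_def by auto
  have nA: "Hub a \<notin> set (Hub b # zs)" using dP PS by auto
  have sub: "set (Hub b # zs) \<subseteq> set P" using PS by auto
  have Q: "\<exists>Q'. pth (Suc n) Q' (Hub 1) (Hub 2) \<and>
        fw ?G (Hub a # ys @ [Hub b]) = fw (Suc n) Q'" if aA: "a = hubA i"
  proof -
    let ?S = "Hub a # ys @ [Hub b]"
    define Q' where "Q' = map (unemb i) ?S"
    have SQ: "map (emb i) Q' = ?S" unfolding Q'_def map_map
      by (rule map_idI) (use all emb_unemb[OF i] in fastforce)
    have bB: "b = hubB i" using dir aA ab by auto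
    have "hubA i \<noteq> hubB i" using i by (auto simp: hubA_def hubB_def)
    then have hQ: "hd Q' = Hub 1" and lQ: "last Q' = Hub 2"
      using aA bB unfolding Q'_def by (auto simp: unemb_def last_map)
    have "distinct ?S" using dP PS by auto
    then have dQ: "distinct Q'" using SQ by (metis distinct_map)
    have "adjp (Suc n) Q'" using adS SQ adjp_emb[OF i, of n Q'] by simp
    then have "pth (Suc n) Q' (Hub 1) (Hub 2)" using hQ lQ dQ unfolding pth_def Q'_def by auto
    moreover have "fw ?G ?S = fw (Suc n) Q'" using SQ fw_emb[OF i, of n Q'] by simp
    ultimately show ?thesis by blast
  qed
  show ?thesis
    using i PS dir fwS pR nA sub Q
    by (intro exI[of _ i] exI[of _ ys] exI[of _ zs] exI[of _ b] conjI) simp_all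
qed

lemma distinct_end: "pth g (Hub 2 # zs) (Hub 2) (Hub 2) \<Longrightarrow> zs = []"
  unfolding pth_def using last_distinct[of "Hub 2" zs] by simp

lemma i4: "i \<in> {1..4::nat} \<Longrightarrow> i = 1 \<or> i = 2 \<or> i = 3 \<or> i = 4"
  by auto

lemma from4:
  assumes p: "pth (Suc (Suc n)) P (Hub 4) (Hub 2)" and n3: "Hub 3 \<notin> set P"
    and IH: "\<And>Q. pth (Suc n) Q (Hub 1) (Hub 2) \<Longrightarrow> odd (fw (Suc n) Q)"
  shows "odd (fw (Suc (Suc n)) P)"
proof -
  have a2: "(4::nat) \<noteq> 2" by simp
  from first_seg[OF p a2] obtain i ys zs b where
    i: "i \<in> {1..4}" and PS: "P = (Hub 4 # ys) @ Hub b # zs" and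
    dir: "(4 = hubA i \<and> b = hubB i) \<or> (4 = hubB i \<and> b = hubA i)" and
    fwS: "fw (Suc (Suc n)) P = fw (Suc (Suc n)) (Hub 4 # ys @ [Hub b]) + fw (Suc (Suc n)) (Hub b # zs)" and
    pR: "pth (Suc (Suc n)) (Hub b # zs) (Hub b) (Hub 2)" and
    Q: "4 = hubA i \<longrightarrow> (\<exists>Q'. pth (Suc n) Q' (Hub 1) (Hub 2) \<and>
        fw (Suc (Suc n)) (Hub 4 # ys @ [Hub b]) = fw (Suc n) Q')"
    by blast
  have "b \<noteq> 3" using n3 PS by auto
  then have iv: "i = 3" "b = 2" using i dir by (auto simp: hubA_def hubB_def split: if_splits)
  then have "zs = []" using pR distinct_end by blast
  moreover obtain Q' where "pth (Suc n) Q' (Hub 1) (Hub 2)"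
    "fw (Suc (Suc n)) (Hub 4 # ys @ [Hub b]) = fw (Suc n) Q'"
    using Q iv by (auto simp: hubA_def split: if_splits)
  ultimately show ?thesis using fwS IH by simp
qed

lemma from3:
  assumes p: "pth (Suc (Suc n)) P (Hub 3) (Hub 2)" and n1: "Hub 1 \<notin> set P"
    and IH: "\<And>Q. pth (Suc n) Q (Hub 1) (Hub 2) \<Longrightarrow> odd (fw (Suc n) Q)"
  shows "even (fw (Suc (Suc n)) P)"
proof -
  have a2: "(3::nat) \<noteq> 2" by simp
  from first_seg[OF p a2] obtain i ys zs b where
    i: "i \<in> {1..4}" and PS: "P = (Hub 3 # ys) @ Hub b # zs" and
    dir: "(3 = hubA i \<and> b = hubB i) \<or> (3 = hubB i \<and> b = hubA i)" and
    fwS: "fw (Suc (Suc n)) P = fw (Suc (Suc n)) (Hub 3 # ys @ [Hub b]) + fw (Suc (Suc n)) (Hub b # zs)" and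
    pR: "pth (Suc (Suc n)) (Hub b # zs) (Hub b) (Hub 2)" and
    nA: "Hub 3 \<notin> set (Hub b # zs)" and sub: "set (Hub b # zs) \<subseteq> set P" and
    Q: "3 = hubA i \<longrightarrow> (\<exists>Q'. pth (Suc n) Q' (Hub 1) (Hub 2) \<and>
        fw (Suc (Suc n)) (Hub 3 # ys @ [Hub b]) = fw (Suc n) Q')"
    by blast
  have "b \<noteq> 1" using n1 PS by auto
  then have iv: "i = 2" "b = 4" using i dir by (auto simp: hubA_def hubB_def split: if_splits)
  have pR4: "pth (Suc (Suc n)) (Hub 4 # zs) (Hub 4) (Hub 2)" using pR iv by simp
  have n34: "Hub 3 \<notin> set (Hub 4 # zs)" using nA iv by simp
  have odd4: "odd (fw (Suc (Suc n)) (Hub 4 # zs))" by (rule from4[OF pR4 n34 IH])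
  obtain Q' where q1: "pth (Suc n) Q' (Hub 1) (Hub 2)" and
    q2: "fw (Suc (Suc n)) (Hub 3 # ys @ [Hub b]) = fw (Suc n) Q'"
    using Q iv by (auto simp: hubA_def split: if_splits)
  have "odd (fw (Suc (Suc n)) (Hub 3 # ys @ [Hub b]))" using IH[OF q1] q2 by simp
  then show ?thesis using fwS odd4 iv by simp
qed

lemma from1:
  assumes p: "pth (Suc (Suc n)) P (Hub 1) (Hub 2)"
    and IH: "\<And>Q. pth (Suc n) Q (Hub 1) (Hub 2) \<Longrightarrow> odd (fw (Suc n) Q)"
  shows "odd (fw (Suc (Suc n)) P)"
proof -
  have a2: "(1::nat) \<noteq> 2" by simp
  from first_seg[OF p a2] obtain i ys zs b where
    i: "i \<in> {1..4}" and PS: "P = (Hub 1 # ys) @ Hub b # zs" and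
    dir: "(1 = hubA i \<and> b = hubB i) \<or> (1 = hubB i \<and> b = hubA i)" and
    fwS: "fw (Suc (Suc n)) P = fw (Suc (Suc n)) (Hub 1 # ys @ [Hub b]) + fw (Suc (Suc n)) (Hub b # zs)" and
    pR: "pth (Suc (Suc n)) (Hub b # zs) (Hub b) (Hub 2)" and
    nA: "Hub 1 \<notin> set (Hub b # zs)" and
    Q: "1 = hubA i \<longrightarrow> (\<exists>Q'. pth (Suc n) Q' (Hub 1) (Hub 2) \<and>
        fw (Suc (Suc n)) (Hub 1 # ys @ [Hub b]) = fw (Suc n) Q')"
    by blast
  have iA: "1 = hubA i" using i4[OF i] dir by (elim disjE) (simp_all add: hubA_def hubB_def)
  obtain Q' where q1: "pth (Suc n) Q' (Hub 1) (Hub 2)" and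
    q2: "fw (Suc (Suc n)) (Hub 1 # ys @ [Hub b]) = fw (Suc n) Q'"
    using Q iA by blast
  have oS: "odd (fw (Suc (Suc n)) (Hub 1 # ys @ [Hub b]))" using IH[OF q1] q2 by simp
  have "b = 2 \<or> b = 3" using i4[OF i] dir by (elim disjE) (simp_all add: hubA_def hubB_def)
  then show ?thesis
  proof
    assume "b = 2"
    then have "zs = []" using pR distinct_end by blast
    then show ?thesis using fwS oS \<open>b = 2\<close> by simp
  next
    assume "b = 3"
    have pR3: "pth (Suc (Suc n)) (Hub 3 # zs) (Hub 3) (Hub 2)" using pR \<open>b = 3\<close> by simp
    have n13: "Hub 1 \<notin> set (Hub 3 # zs)" using nA \<open>b = 3\<close> by simp
    have "even (fw (Suc (Suc n)) (Hub 3 # zs))" by (rule from3[OF pR3 n13 IH])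
    then show ?thesis using fwS oS \<open>b = 3\<close> by simp
  qed
qed

lemma main: "pth (Suc n) P (Hub 1) (Hub 2) \<Longrightarrow> odd (fw (Suc n) P)"
proof (induction n arbitrary: P)
  case 0
  then show ?case using base by simp
next
  case (Suc n)
  show ?case by (rule from1[OF Suc.prems Suc.IH])
qed

theorem lemma3:
  fixes g :: nat and P :: "hvert list"
  assumes "g \<ge> 1"
    and "is_path g P (Hub 1) (Hub 2)"
    and "nice g P"
  shows "oddly_oriented g P"
proof -
  obtain n where g: "g = Suc n" using assms(1) by (cases g) auto
  have "pth g P (Hub 1) (Hub 2)" using assms(2) unfolding is_path_def pth_def adjp_nth by blast
  then have "odd (fw g P)" using main g by blast
  then show ?thesis unfolding oddly_oriented_def fw_card .
qed

end
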